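(* Consider the relative dynamics described in the context, with initial position $\mathbf{x}_0=(x_0,y_0)$, $\|\mathbf{x}_0\|>1$, $y_0\ge 0$, and game duration $T>0$. Capture is guaranteed (i.e. for every heading function $\psi(\cdot)$ there is $t\le T$ with $\|\mathbf{x}(t)\|<1$) if and only if $$\mu x_0+\sqrt{1-\mu^2}\,y_0<1,\qquad x_0>\mu,$$ and $$T>T_{\rm survive}(\mathbf{x}_0):=\frac{1}{1-\mu^2}\Big[(x_0-\mu)-\sqrt{(1-\mu x_0)^2-(1-\mu^2)y_0^2}\Big].$$
   Context: Pursuer-fixed frame: the Evader's relative position $\mathbf{x}(t)=(x(t),y(t))\in\mathbb{R}^2$ evolves as $\dot x=\mu\cos\psi(t)-1$, $\dot y=\mu\sin\psi(t)$, $\mathbf{x}(0)=\mathbf{x}_0$, where $\mu\in(0,1)$ and $\psi(t)$ is the Evader's heading (its control). The Proximity Circle is $\|\mathbf{x}\|=1$; capture occurs when $\|\mathbf{x}(t)\|<1$. The paper assumes throughout (by symmetry about the $x$-axis) that $y\ge 0$. *)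

theory Defs
  imports "HOL-Analysis.Analysis"
begin

text \<open>Relative (pursuer-fixed frame) position of the Evader at time t under heading
  function psi, obtained by integrating the dynamics
  x' = mu cos psi - 1, y' = mu sin psi from (x0,y0) at time 0.\<close>
definition traj :: "real \<Rightarrow> real \<Rightarrow> real \<Rightarrow> (real \<Rightarrow> real) \<Rightarrow> real \<Rightarrow> real \<times> real" where
  "traj mu x0 y0 psi t =
     (x0 + integral {0..t} (\<lambda>s. mu * cos (psi s) - 1),
      y0 + integral {0..t} (\<lambda>s. mu * sin (psi s)))"

definition T_survive :: "real \<Rightarrow> real \<Rightarrow> real \<Rightarrow> real" where
  "T_survive mu x0 y0 =
     1 / (1 - mu^2) * ((x0 - mu) - sqrt ((1 - mu * x0)^2 - (1 - mu^2) * y0^2))"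

end

theory Submission imports Defs begin
lemma intF:
  fixes psi :: "real \<Rightarrow> real"
  assumes "psi \<in> borel_measurable lborel" "0 < mu"
  shows "(\<lambda>s. (mu * cos (psi s), mu * sin (psi s))) integrable_on {a..b}"
    and "\<And>s. norm (mu * cos (psi s), mu * sin (psi s)) \<le> mu"
proof -
  have m: "(\<lambda>s. (mu * cos (psi s), mu * sin (psi s))) \<in> borel_measurable lborel"
    using assms(1) by measurable
  have mm: "(\<lambda>s. (mu * cos (psi s), mu * sin (psi s))) \<in> borel_measurable (lebesgue_on {a..b})"
    by (rule measurable_restrict_space1, rule measurable_completion, rule m)
  moreover show nb: "norm (mu * cos (psi s), mu * sin (psi s)) \<le> mu" for s
  proof -
    have "(mu * cos (psi s))^2 + (mu * sin (psi s))^2 = mu^2"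
      by (simp add: power_mult_distrib flip: distrib_left)
    then have "norm (mu * cos (psi s), mu * sin (psi s)) = sqrt (mu^2)" by (simp only: norm_Pair real_norm_def power2_abs)
    then show ?thesis using assms(2) by simp
  qed
  show "(\<lambda>s. (mu * cos (psi s), mu * sin (psi s))) integrable_on {a..b}"
    by (rule measurable_bounded_by_integrable_imp_integrable[OF mm integrable_const_ivl[of mu a b]]) (simp_all add: nb)
qed

lemma traj_bound:
  fixes psi :: "real \<Rightarrow> real"
  assumes "psi \<in> borel_measurable lborel" "0 < mu" "0 \<le> t"
  shows "norm (traj mu x0 y0 psi t - (x0 - t, y0)) \<le> mu * t"
proof -
  define F where "F = (\<lambda>s. (mu * cos (psi s), mu * sin (psi s)))"
  have iF: "F integrable_on {0..t}" unfolding F_def by (rule intF(1)[OF assms(1,2)])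
  have i1: "(\<lambda>s. mu * cos (psi s)) integrable_on {0..t}"
    using integrable_linear[OF iF bounded_linear_fst] by (simp add: F_def o_def)
  have i2: "(\<lambda>s. mu * sin (psi s)) integrable_on {0..t}"
    using integrable_linear[OF iF bounded_linear_snd] by (simp add: F_def o_def)
  have e1: "integral {0..t} (\<lambda>s. mu * cos (psi s)) = fst (integral {0..t} F)"
    using integral_linear[OF iF bounded_linear_fst] by (simp add: F_def o_def)
  have e2: "integral {0..t} (\<lambda>s. mu * sin (psi s)) = snd (integral {0..t} F)"
    using integral_linear[OF iF bounded_linear_snd] by (simp add: F_def o_def)
  have e3: "integral {0..t} (\<lambda>s. mu * cos (psi s) - 1) = integral {0..t} (\<lambda>s. mu * cos (psi s)) - t"
    using integral_diff[OF i1 integrable_const_ivl[of 1 0 t]] assms(3) by simp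
  have "traj mu x0 y0 psi t - (x0 - t, y0) = integral {0..t} F"
    unfolding traj_def e3 e1 e2 by (simp add: prod_eq_iff)
  moreover have "norm (integral {0..t} F) \<le> mu * t"
    using has_integral_bound[of mu F "integral {0..t} F" 0 t] assms(2,3) iF intF(2)[OF assms(1,2)]
    by (auto simp: F_def has_integral_integral)
  ultimately show ?thesis by simp
qed

lemma cs1:
  fixes a b ux uy :: real
  assumes "1 \<le> ux*a + uy*b" "ux^2 + uy^2 = 1"
  shows "1 \<le> norm (a, b)"
proof -
  have "(ux^2+uy^2)*(a^2+b^2) = (ux*a+uy*b)^2 + (ux*b - uy*a)^2" by algebra
  hence "a^2+b^2 = (ux*a+uy*b)^2 + (ux*b - uy*a)^2" using assms(2) by simp
  moreover have "(ux*b - uy*a)^2 \<ge> 0" by simp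
  ultimately have "(ux*a+uy*b)^2 \<le> a^2+b^2" by linarith
  moreover have "1 \<le> (ux*a+uy*b)^2" using assms(1) by (simp add: one_le_power)
  ultimately show ?thesis by (simp add: norm_Pair)
qed

lemma escape:
  fixes ux uy :: real
  assumes "ux^2 + uy^2 = 1"
    and "\<And>t. 0 \<le> t \<Longrightarrow> t \<le> T \<Longrightarrow> 1 \<le> ux*x0 + uy*y0 + t*(mu - ux)"
  shows "\<exists>psi. psi \<in> borel_measurable lborel \<and> (\<forall>t\<in>{0..T}. \<not> norm (traj mu x0 y0 psi t) < 1)"
proof -
  obtain c where c: "ux = cos c" "uy = sin c" using sincos_total_2pi[OF assms(1)] by blast
  have "\<not> norm (traj mu x0 y0 (\<lambda>_. c) t) < 1" if "t \<in> {0..T}" for t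
  proof -
    have tr: "traj mu x0 y0 (\<lambda>_. c) t = (x0 + t*(mu*ux - 1), y0 + t*(mu*uy))"
      using that by (simp add: traj_def c)
    have "1 \<le> ux*(x0 + t*(mu*ux - 1)) + uy*(y0 + t*(mu*uy))"
    proof -
      have "ux*(x0 + t*(mu*ux - 1)) + uy*(y0 + t*(mu*uy)) = ux*x0 + uy*y0 + t*(mu*(ux^2+uy^2) - ux)"
        by (simp add: algebra_simps power2_eq_square)
      then show ?thesis using assms that by simp
    qed
    from cs1[OF this assms(1)] show ?thesis by (simp add: tr)
  qed
  then show ?thesis by (intro exI[of _ "\<lambda>_. c"]) auto
qed

lemma alg1: "(1 - mu^2)*((x0 - t1)^2 + y0^2 - (1 - mu*t1)^2) = ((1 - mu^2)*t1)^2 - 2*((1 - mu^2)*t1)*(x0-mu) + (1 - mu^2)*(x0^2+y0^2-1)"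
  for mu x0 t1 y0 :: real
  by (simp add: power2_eq_square algebra_simps)

lemma alg2: "a = b - s \<Longrightarrow> a^2 - 2*a*b + c = s^2 - b^2 + c"
  for a b c s:: real
  by algebra

theorem lemma3:
  fixes mu x0 y0 T :: real
  assumes "0 < mu" and "mu < 1"
    and "norm (x0, y0) > 1" and "y0 \<ge> 0" and "T > 0"
  shows "(\<forall>psi. psi \<in> borel_measurable lborel \<longrightarrow>
            (\<exists>t\<in>{0..T}. norm (traj mu x0 y0 psi t) < 1))
         \<longleftrightarrow> (mu * x0 + sqrt (1 - mu^2) * y0 < 1 \<and> x0 > mu \<and> T > T_survive mu x0 y0)"
proof -
  define k where "k = 1 - mu^2"
  have "mu^2 < 1^2" using assms(1,2) by (intro power_strict_mono) auto
  then have k0: "k > 0" by (simp add: k_def)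
  define D where "D = (1 - mu * x0)^2 - k * y0^2"
  define s where "s = sqrt D"
  define t1 where "t1 = T_survive mu x0 y0"
  have t1s: "t1 = ((x0 - mu) - s) / k" by (simp add: t1_def T_survive_def k_def s_def D_def)
  have r1: "x0^2 + y0^2 > 1" using assms(3) by (simp add: norm_Pair real_less_rsqrt)
  have sk: "sqrt k ^ 2 = k" using k0 by simp
  have key: "D = (x0 - mu)^2 - k * (x0^2 + y0^2 - 1)" by (simp add: D_def k_def algebra_simps power2_eq_square)
  show ?thesis
  proof
    assume L: "\<forall>psi. psi \<in> borel_measurable lborel \<longrightarrow> (\<exists>t\<in>{0..T}. norm (traj mu x0 y0 psi t) < 1)"
    have noesc: False if "ux^2 + uy^2 = 1" "\<And>t. 0 \<le> t \<Longrightarrow> t \<le> T \<Longrightarrow> 1 \<le> ux*x0 + uy*y0 + t*(mu - ux)" for ux uy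
      using escape[of ux uy T x0 y0 mu, OF that] L by auto
    show "mu * x0 + sqrt (1 - mu^2) * y0 < 1 \<and> x0 > mu \<and> T > T_survive mu x0 y0"
    proof (intro conjI)
      show A: "mu * x0 + sqrt (1 - mu^2) * y0 < 1"
      proof (rule ccontr)
        assume nA: "\<not> ?thesis"
        show False
        proof (rule noesc[of mu "sqrt k"])
          show "mu^2 + (sqrt k)^2 = 1" using sk by (simp add: k_def)
          show "1 \<le> mu*x0 + sqrt k*y0 + t*(mu - mu)" for t using nA by (simp add: k_def)
        qed
      qed
      show X: "x0 > mu"
      proof (rule ccontr)
        assume nx: "\<not> ?thesis"
        define r where "r = sqrt (x0^2 + y0^2)"
        have r1': "r > 1" using r1 by (simp add: r_def real_less_rsqrt)
        have rr: "r^2 = x0^2+y0^2" using r_def by simp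
        show False
        proof (rule noesc[of "x0/r" "y0/r"])
          have "x0^2+y0^2 > 0" using r1 by simp
          then show "(x0/r)^2 + (y0/r)^2 = 1" using rr by (simp add: power_divide flip: add_divide_distrib) auto
        next
          fix t assume t: "0 \<le> t" "t \<le> T"
          have "x0/r*x0 + y0/r*y0 = r^2/r" using rr by (simp add: power2_eq_square add_divide_distrib)
          also have "\<dots> = r" by (simp add: power2_eq_square)
          finally have "x0/r*x0 + y0/r*y0 = r" .
          moreover have "x0/r \<le> mu"
          proof -
            have "mu < mu*r" using r1' assms(1) by simp
            then show ?thesis using nx r1' by (simp add: divide_le_eq)
          qed
          moreover have "t*(mu - x0/r) \<ge> 0" using t calculation by simp
          ultimately show "1 \<le> x0/r*x0 + y0/r*y0 + t*(mu - x0/r)" using r1' by simp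
        qed
      qed
      show "T > T_survive mu x0 y0"
      proof (rule ccontr)
        assume nT: "\<not> ?thesis"
        have a1: "1 - mu*x0 > sqrt k * y0" using A by (simp add: k_def)
        have skp: "sqrt k * y0 \<ge> 0" using assms(4) k0 by simp
        have "(sqrt k * y0)^2 < (1 - mu*x0)^2" using a1 skp by (intro power_strict_mono) auto
        then have D0: "D > 0" by (simp add: D_def power_mult_distrib sk)
        have ss: "s^2 = D" "s > 0" using D0 by (auto simp: s_def)
        have t1m: "t1 * k \<le> x0 - mu" using t1s k0 ss by simp
        have p: "1 - mu*t1 > 0"
        proof -
          have "mu * (t1*k) \<le> mu*(x0 - mu)" using t1m assms(1) by simp
          moreover have "1 - mu * x0 > 0" using a1 skp by simp
          ultimately have "k*(1 - mu*t1) > 0" by (simp add: k_def algebra_simps power2_eq_square)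
          then show ?thesis using k0 by (simp add: zero_less_mult_iff)
        qed
        have f0: "(x0 - t1)^2 + y0^2 = (1 - mu*t1)^2"
        proof -
          have kt1: "k*t1 = (x0 - mu) - s" using t1s k0 by simp
          have "k*((x0 - t1)^2 + y0^2 - (1 - mu*t1)^2) = (k*t1)^2 - 2*(k*t1)*(x0-mu) + k*(x0^2+y0^2-1)"
            unfolding k_def by (rule alg1)
          also have "\<dots> = s^2 - (x0-mu)^2 + k*(x0^2+y0^2-1)" using kt1 by (rule alg2)
          also have "\<dots> = 0" using ss key by simp
          finally have "(x0 - t1)^2 + y0^2 - (1 - mu*t1)^2 = 0" using k0 by simp
          then show ?thesis by simp
        qed
        define ux where "ux = (x0 - t1)/(1 - mu*t1)"
        define uy where "uy = y0/(1 - mu*t1)"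
        show False
        proof (rule noesc[of ux uy])
          have "ux^2 + uy^2 = ((x0-t1)^2 + y0^2)/(1-mu*t1)^2"
            unfolding ux_def uy_def by (simp only: power_divide add_divide_distrib)
          also have "\<dots> = 1" unfolding f0 using p by simp
          finally show "ux^2 + uy^2 = 1" .
        next
          fix t assume t: "0 \<le> t" "t \<le> T"
          have g1: "ux*x0 + uy*y0 + t1*(mu - ux) = 1"
          proof -
            define q where "q = 1 - mu*t1"
            have q0: "q > 0" using p q_def by simp
            have uxq: "ux * q = x0 - t1" and uyq: "uy * q = y0" using q0 by (simp_all add: ux_def uy_def q_def)
            have "(ux*x0 + uy*y0 - t1*ux) * q = (ux*q)*x0 + (uy*q)*y0 - t1*(ux*q)" by (simp add: algebra_simps)
            also have "\<dots> = (x0-t1)^2 + y0^2" unfolding uxq uyq by (simp add: algebra_simps power2_eq_square)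
            also have "\<dots> = q * q" using f0 by (simp add: q_def power2_eq_square)
            finally have "ux*x0 + uy*y0 - t1*ux = q" using q0 by simp
            then show ?thesis by (simp add: q_def algebra_simps)
          qed
          have "ux \<ge> mu" unfolding ux_def using p t1m assms(1) by (simp add: le_divide_eq k_def algebra_simps power2_eq_square)
          moreover have "t \<le> t1" using t nT t1_def by simp
          ultimately have "(t1 - t)*(ux - mu) \<ge> 0" by simp
          then show "1 \<le> ux*x0 + uy*y0 + t*(mu - ux)" using g1 by (simp add: algebra_simps)
        qed
      qed
    qed
  next
    assume R: "mu * x0 + sqrt (1 - mu^2) * y0 < 1 \<and> x0 > mu \<and> T > T_survive mu x0 y0"
    have a1: "1 - mu*x0 > sqrt k * y0" using R by (simp add: k_def)
    have skp: "sqrt k * y0 \<ge> 0" using assms(4) k0 by simp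
    have "(sqrt k * y0)^2 < (1 - mu*x0)^2" using a1 skp by (intro power_strict_mono) auto
    then have D0: "D > 0" by (simp add: D_def power_mult_distrib sk)
    have ss: "s^2 = D" "s > 0" using D0 by (auto simp: s_def)
    define m where "m = (x0 - mu)/k"
    have t1m: "t1 < m" using t1s ss k0 by (simp add: m_def divide_strict_right_mono)
    have t1p: "t1 > 0"
    proof -
      have "s^2 < (x0 - mu)^2" using ss key r1 k0 by simp
      moreover have "x0 - mu > 0" using R by simp
      ultimately have "s < x0 - mu" using power_less_imp_less_base[of s 2 "x0 - mu"] by simp
      then show ?thesis using t1s k0 by simp
    qed
    define t where "t = (t1 + min T m)/2"
    have tt: "t1 < t" "t < T" "t < m" using t1m R t1_def by (auto simp: t_def)
    have p: "1 - mu*t > 0"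
    proof -
      have "t*k < x0 - mu" using tt(3) k0 by (simp add: m_def pos_less_divide_eq)
      then have "mu * (t*k) \<le> mu*(x0 - mu)" using assms(1) by (intro mult_left_mono) auto
      moreover have "1 - mu * x0 > 0" using a1 skp by simp
      ultimately have "k*(1 - mu*t) > 0" by (simp add: k_def algebra_simps power2_eq_square)
      then show ?thesis using k0 by (simp add: zero_less_mult_iff)
    qed
    have fneg: "(x0 - t)^2 + y0^2 < (1 - mu*t)^2"
    proof -
      define e where "e = x0 - mu - k*t"
      have kt1: "k*t1 = (x0 - mu) - s" using t1s k0 by simp
      have "k*t1 < k*t" using tt k0 by simp
      then have e1: "e < s" using kt1 by (simp add: e_def)
      have "k*t < k*m" using tt k0 by simp
      then have e0: "0 < e" using k0 by (simp add: e_def m_def)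
      have "e^2 < s^2" using e0 e1 by (intro power_strict_mono) auto
      moreover have "k*((x0 - t)^2 + y0^2 - (1 - mu*t)^2) = e^2 - D"
        using key by (simp add: e_def k_def algebra_simps power2_eq_square)
      ultimately have "k*((x0 - t)^2 + y0^2 - (1 - mu*t)^2) < 0" using ss by simp
      then show ?thesis using k0 by (simp add: mult_less_0_iff)
    qed
    have "sqrt ((x0 - t)^2 + y0^2) < sqrt ((1 - mu*t)^2)" using fneg by (rule real_sqrt_less_mono)
    then have n1: "norm (x0 - t, y0) < 1 - mu*t" using p by (simp add: norm_Pair)
    show "\<forall>psi. psi \<in> borel_measurable lborel \<longrightarrow> (\<exists>t\<in>{0..T}. norm (traj mu x0 y0 psi t) < 1)"
    proof (intro allI impI)
      fix psi :: "real \<Rightarrow> real" assume "psi \<in> borel_measurable lborel"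
      from traj_bound[OF this assms(1), of t x0 y0] tt t1p
      have b: "norm (traj mu x0 y0 psi t - (x0 - t, y0)) \<le> mu * t" by simp
      have "norm (traj mu x0 y0 psi t) \<le> norm (traj mu x0 y0 psi t - (x0 - t, y0)) + norm (x0 - t, y0)"
        using norm_triangle_sub[of "traj mu x0 y0 psi t" "(x0 - t, y0)"] by simp
      then have "norm (traj mu x0 y0 psi t) < 1" using b n1 by simp
      then show "\<exists>t\<in>{0..T}. norm (traj mu x0 y0 psi t) < 1" using tt t1p by (intro bexI[of _ t]) auto
    qed
  qed
qed
end
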